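(* Let $X$ be a nonempty set, $\circ:X\times X\to X$ a binary operation, and $p,q>0$ constants. Let \[ S:=\Big\{\tfrac{a}{a+b}\ \Big|\ a,b>0 \text{ and there is an operation } *:X\times X\to X \text{ such that every } (\circ,p,q)\text{-convex function is } ( *,a,b)\text{-convex}\Big\}. \] Then $1-S\subseteq S$ (where $1-S=\{1-s\mid s\in S\}$), and $S$ is a dense multiplicative subsemigroup of $[0,1]$ (i.e., $S\subseteq[0,1]$, $st\in S$ whenever $s,t\in S$, and $S$ is dense in $[0,1]$).
   Context: Given a nonempty set $X$, a binary operation $\star:X\times X\to X$ and constants $a,b>0$, a function $f:X\to\mathbb{R}$ is called $(\star,a,b)$-convex if $f(x\star y)\leq a f(x)+b f(y)$ for all $x,y\in X$. *)

theory Defs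
  imports "HOL-Analysis.Analysis"
begin

definition op_convex :: "('a \<Rightarrow> 'a \<Rightarrow> 'a) \<Rightarrow> real \<Rightarrow> real \<Rightarrow> ('a \<Rightarrow> real) \<Rightarrow> bool" where
  "op_convex star a b f \<longleftrightarrow> (\<forall>x y. f (star x y) \<le> a * f x + b * f y)"

end

theory Submission
  imports Defs
begin

theorem lemma3p4:
  fixes circ :: "'a \<Rightarrow> 'a \<Rightarrow> 'a" and p q :: real and S :: "real set"
  assumes "p > 0" and "q > 0"
  assumes S_def: "S = {a / (a + b) | a b. a > 0 \<and> b > 0 \<and>
      (\<exists>star :: 'a \<Rightarrow> 'a \<Rightarrow> 'a. \<forall>f. op_convex circ p q f \<longrightarrow> op_convex star a b f)}"
  shows "(\<lambda>s. 1 - s) ` S \<subseteq> S \<and> S \<subseteq> {0..1} \<and> (\<forall>s\<in>S. \<forall>t\<in>S. s * t \<in> S)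
         \<and> {0..1} \<subseteq> closure S"
proof -
  have memI: "a / (a + b) \<in> S" if "a > 0" "b > 0"
    "\<forall>f. op_convex circ p q f \<longrightarrow> op_convex star a b f" for a b and star :: "'a \<Rightarrow> 'a \<Rightarrow> 'a"
    using S_def that by blast
  have memE: "\<exists>a b (star :: 'a \<Rightarrow> 'a \<Rightarrow> 'a). s = a / (a + b) \<and> a > 0 \<and> b > 0 \<and>
      (\<forall>f. op_convex circ p q f \<longrightarrow> op_convex star a b f)" if "s \<in> S" for s
    using S_def that by blast
  have p0: "p / (p + q) \<in> S" using memI[of p q circ] assms(1,2) by blast
  have rng: "0 < s \<and> s < 1" if sS: "s \<in> S" for s
  proof -
    obtain a b where "s = a / (a + b)" "a > 0" "b > 0" using memE[OF sS] by blast
    then show ?thesis by (simp add: divide_less_eq)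
  qed
  have compl: "1 - s \<in> S" if sS: "s \<in> S" for s
  proof -
    obtain a b and star :: "'a \<Rightarrow> 'a \<Rightarrow> 'a" where h: "s = a / (a + b)" "a > 0" "b > 0"
      "\<forall>f. op_convex circ p q f \<longrightarrow> op_convex star a b f" using memE[OF sS] by blast
    have "\<forall>f. op_convex circ p q f \<longrightarrow> op_convex (\<lambda>x y. star y x) b a f"
      using h(4) unfolding op_convex_def by (metis add.commute)
    then have "b / (b + a) \<in> S" using memI h by blast
    moreover have "b / (b + a) = 1 - s" using h by (simp add: field_simps)
    ultimately show ?thesis by simp
  qed
  have mult: "s * t \<in> S" if sS: "s \<in> S" "t \<in> S" for s t
  proof -
    obtain a b and st1 :: "'a \<Rightarrow> 'a \<Rightarrow> 'a" where h: "s = a / (a + b)" "a > 0" "b > 0"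
      "\<forall>f. op_convex circ p q f \<longrightarrow> op_convex st1 a b f" using memE[OF sS(1)] by blast
    obtain c d and st2 :: "'a \<Rightarrow> 'a \<Rightarrow> 'a" where g: "t = c / (c + d)" "c > 0" "d > 0"
      "\<forall>f. op_convex circ p q f \<longrightarrow> op_convex st2 c d f" using memE[OF sS(2)] by blast
    have "op_convex (\<lambda>x y. st1 (st2 x y) (st2 y y)) (a*c) (a*d+b*c+b*d) f"
      if f: "op_convex circ p q f" for f
    proof -
      have h1: "\<And>x y. f (st1 x y) \<le> a * f x + b * f y" using h(4) f unfolding op_convex_def by blast
      have h2: "\<And>x y. f (st2 x y) \<le> c * f x + d * f y" using g(4) f unfolding op_convex_def by blast
      show ?thesis unfolding op_convex_def
      proof (intro allI)
        fix x y
        have "f (st1 (st2 x y) (st2 y y)) \<le> a * f (st2 x y) + b * f (st2 y y)" by (rule h1)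
        also have "\<dots> \<le> a * (c * f x + d * f y) + b * (c * f y + d * f y)"
          using h2[of x y] h2[of y y] h(2,3) by (intro add_mono mult_left_mono) auto
        also have "\<dots> = a * c * f x + (a*d+b*c+b*d) * f y" by (simp add: algebra_simps)
        finally show "f (st1 (st2 x y) (st2 y y)) \<le> a * c * f x + (a*d+b*c+b*d) * f y" .
      qed
    qed
    then have "(a*c) / (a*c + (a*d+b*c+b*d)) \<in> S"
      using memI[of "a*c" "a*d+b*c+b*d" "\<lambda>x y. st1 (st2 x y) (st2 y y)"] h g
      by (simp add: add_pos_pos)
    moreover have "(a*c) / (a*c + (a*d+b*c+b*d)) = s * t"
    proof -
      have "a + b > 0" "c + d > 0" using h g by auto
      then show ?thesis unfolding h(1) g(1) by (simp add: field_simps)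
    qed
    ultimately show ?thesis by simp
  qed
  have pow: "s ^ Suc n \<in> S" if "s \<in> S" for s n
    by (induction n) (use that mult in auto)
  have dense: "x \<in> closure S" if x: "0 \<le> x" "x \<le> 1" for x
    unfolding closure_approachable
  proof (intro allI impI)
    fix e :: real assume e: "e > 0"
    define s0 where "s0 = p / (p + q)"
    have s0: "s0 \<in> S" using p0 s0_def by simp
    obtain n where n: "s0 ^ n < e" using real_arch_pow_inv[OF e] rng[OF s0] by blast
    have u: "s0 ^ Suc n \<in> S" using pow s0 by blast
    define u where "u = s0 ^ Suc n"
    have ue: "u < e" using n rng[OF s0] unfolding u_def
      by (smt (verit) mult_left_le_one_le power_Suc zero_le_power)
    have uS: "u \<in> S" using u u_def by simp
    define v where "v = 1 - u"
    have vS: "v \<in> S" using compl uS v_def by simp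
    have v01: "0 < v" "v < 1" using rng[OF vS] by auto
    show "\<exists>y\<in>S. dist y x < e"
    proof (cases "x = 0")
      case True
      then show ?thesis using uS ue rng[OF uS] by (intro bexI[of _ u]) (auto simp: dist_real_def)
    next
      case False
      then have xp: "x > 0" using x by simp
      obtain m where m: "v ^ m < x" using real_arch_pow_inv[OF xp v01(2)] by blast
      obtain k where k: "k \<le> m" "\<forall>i<k. \<not> v ^ i \<le> x" "v ^ k \<le> x"
        using ex_least_nat_le[of "\<lambda>i. v ^ i \<le> x" m] m
        by (cases "x = 1") (auto intro: ex_least_nat_le[of "\<lambda>i. v ^ i \<le> x" m])
      show ?thesis
      proof (cases k)
        case 0
        then have "x = 1" using k x by simp
        then show ?thesis using vS ue v_def rng[OF uS]
          by (intro bexI[of _ v]) (auto simp: dist_real_def)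
      next
        case (Suc j)
        have vk: "v ^ k \<in> S" using pow vS Suc by blast
        have "v ^ j > x" using k Suc by auto
        have "x - v ^ k < v ^ j - v ^ k" using \<open>v ^ j > x\<close> by simp
        also have "\<dots> = v ^ j * u" unfolding Suc power_Suc v_def by (simp add: algebra_simps)
        also have "\<dots> \<le> u" using v01 rng[OF uS]
          by (simp add: mult_left_le_one_le power_le_one)
        finally have "dist (v ^ k) x < e" using k ue by (simp add: dist_real_def)
        then show ?thesis using vk by blast
      qed
    qed
  qed
  show ?thesis
  proof (intro conjI)
    show "(\<lambda>s. 1 - s) ` S \<subseteq> S" using compl by blast
    show "S \<subseteq> {0..1}" using rng by fastforce
    show "\<forall>s\<in>S. \<forall>t\<in>S. s * t \<in> S" using mult by blast
    show "{0..1} \<subseteq> closure S" using dense by auto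
  qed
qed

end
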